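(* Let $c_1,c_2$ be arbitrary real constants and $\varepsilon,\delta\in\{1,-1\}$. Each of the following functions is an exact solution of the equation $u_t+(u_x+u_{xx})^2=0$ on $\mathbb{R}^2$: (1) $u=c_1+c_2e^{-x}$; (2) $u=c_1-\varepsilon(x+\varepsilon t)+4\delta c_2e^{-\frac12(x+\varepsilon t)}+\varepsilon c_2^2e^{-(x+\varepsilon t)}$; (3) $u=c_1+4\delta e^{-\frac x2}-(t+c_2)e^{-x}$; (4) $u=c_1+c_2e^{-x}+\delta x-t$; (5) $u=c_1+\varepsilon t+\frac{1}{2k}\left(\delta\sqrt{1-4\varepsilon k^2}-1\right)\left(x+\frac1k t\right)$, where $k\neq 0$ if $\varepsilon=-1$, and $0<|k|\le\frac12$ if $\varepsilon=1$. *)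

theory Defs
  imports "HOL-Analysis.Analysis"
begin

definition dx :: "(real \<Rightarrow> real \<Rightarrow> real) \<Rightarrow> real \<Rightarrow> real \<Rightarrow> real" where
  "dx u x t = deriv (\<lambda>y. u y t) x"

definition dt :: "(real \<Rightarrow> real \<Rightarrow> real) \<Rightarrow> real \<Rightarrow> real \<Rightarrow> real" where
  "dt u x t = deriv (\<lambda>s. u x s) t"

definition solves_pde :: "(real \<Rightarrow> real \<Rightarrow> real) \<Rightarrow> bool" where
  "solves_pde u \<longleftrightarrow>
     (\<forall>x t. (\<lambda>s. u x s) differentiable (at t)
          \<and> (\<lambda>y. u y t) differentiable (at x)
          \<and> (\<lambda>y. dx u y t) differentiable (at x)
          \<and> dt u x t + (dx u x t + dx (dx u) x t)^2 = 0)"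

end

theory Submission
  imports Defs
begin

lemma solves_pdeI:
  assumes fx: "\<And>x t. ((\<lambda>y. u y t) has_real_derivative f x t) (at x)"
    and gx: "\<And>x t. ((\<lambda>y. f y t) has_real_derivative g x t) (at x)"
    and ht: "\<And>x t. ((\<lambda>s. u x s) has_real_derivative h x t) (at t)"
    and eq: "\<And>x t. h x t + (f x t + g x t)^2 = 0"
  shows "solves_pde u"
proof -
  have dxu: "dx u = f" using fx by (auto simp: dx_def fun_eq_iff intro!: DERIV_imp_deriv)
  have dxf: "dx f = g" using gx by (auto simp: dx_def fun_eq_iff intro!: DERIV_imp_deriv)
  have dtu: "dt u = h" using ht by (auto simp: dt_def fun_eq_iff intro!: DERIV_imp_deriv)
  show ?thesis unfolding solves_pde_def dxu dxf dtu
    using fx gx ht eq real_differentiable_def by blast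
qed

lemma exp_half_sq: "exp (- z / 2) * exp (- z / 2) = exp (- (z::real))"
  by (simp add: exp_add[symmetric])

lemma sol1: "solves_pde (\<lambda>x t. c1 + c2 * exp (- x))"
  by (rule solves_pdeI[where f="\<lambda>x t. - c2 * exp (- x)" and g="\<lambda>x t. c2 * exp (- x)" and h="\<lambda>x t. 0"])
     (auto intro!: derivative_eq_intros)

lemma sol2:
  assumes "\<epsilon> \<in> {1, -1::real}" and "\<delta> \<in> {1, -1::real}"
  shows "solves_pde (\<lambda>x t. c1 - \<epsilon> * (x + \<epsilon> * t) + 4 * \<delta> * c2 * exp (- (x + \<epsilon> * t) / 2)
                       + \<epsilon> * c2^2 * exp (- (x + \<epsilon> * t)))"
proof (rule solves_pdeI[where f="\<lambda>x t. - \<epsilon> - 2 * \<delta> * c2 * exp (- (x + \<epsilon> * t) / 2) - \<epsilon> * c2^2 * exp (- (x + \<epsilon> * t))"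
   and g="\<lambda>x t. \<delta> * c2 * exp (- (x + \<epsilon> * t) / 2) + \<epsilon> * c2^2 * exp (- (x + \<epsilon> * t))"
   and h="\<lambda>x t. \<epsilon> * (- \<epsilon> - 2 * \<delta> * c2 * exp (- (x + \<epsilon> * t) / 2) - \<epsilon> * c2^2 * exp (- (x + \<epsilon> * t)))"])
  fix x t
  show "((\<lambda>y. c1 - \<epsilon> * (y + \<epsilon> * t) + 4 * \<delta> * c2 * exp (- (y + \<epsilon> * t) / 2)
                       + \<epsilon> * c2^2 * exp (- (y + \<epsilon> * t))) has_real_derivative
    - \<epsilon> - 2 * \<delta> * c2 * exp (- (x + \<epsilon> * t) / 2) - \<epsilon> * c2^2 * exp (- (x + \<epsilon> * t))) (at x)"
    by (auto intro!: derivative_eq_intros simp: algebra_simps)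
  show "((\<lambda>y. - \<epsilon> - 2 * \<delta> * c2 * exp (- (y + \<epsilon> * t) / 2) - \<epsilon> * c2^2 * exp (- (y + \<epsilon> * t))) has_real_derivative
     \<delta> * c2 * exp (- (x + \<epsilon> * t) / 2) + \<epsilon> * c2^2 * exp (- (x + \<epsilon> * t))) (at x)"
    by (auto intro!: derivative_eq_intros simp: algebra_simps)
  show "((\<lambda>s. c1 - \<epsilon> * (x + \<epsilon> * s) + 4 * \<delta> * c2 * exp (- (x + \<epsilon> * s) / 2)
                       + \<epsilon> * c2^2 * exp (- (x + \<epsilon> * s))) has_real_derivative
    \<epsilon> * (- \<epsilon> - 2 * \<delta> * c2 * exp (- (x + \<epsilon> * t) / 2) - \<epsilon> * c2^2 * exp (- (x + \<epsilon> * t)))) (at t)"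
    by (auto intro!: derivative_eq_intros simp: algebra_simps)
  have ee: "\<epsilon> * \<epsilon> = 1" "\<delta> * \<delta> = 1" using assms by auto
  define E where "E = exp (- (x + \<epsilon> * t) / 2)"
  have E2: "exp (- (x + \<epsilon> * t)) = E * E" unfolding E_def by (rule exp_half_sq[symmetric])
  show "\<epsilon> * (- \<epsilon> - 2 * \<delta> * c2 * exp (- (x + \<epsilon> * t) / 2) - \<epsilon> * c2^2 * exp (- (x + \<epsilon> * t))) +
    (- \<epsilon> - 2 * \<delta> * c2 * exp (- (x + \<epsilon> * t) / 2) - \<epsilon> * c2^2 * exp (- (x + \<epsilon> * t)) +
     (\<delta> * c2 * exp (- (x + \<epsilon> * t) / 2) + \<epsilon> * c2^2 * exp (- (x + \<epsilon> * t))))^2 = 0"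
    unfolding E2 E_def[symmetric] power2_eq_square
    using assms by (auto simp: algebra_simps)
qed

lemma sol3: "solves_pde (\<lambda>x t. c1 + 4 * \<delta> * exp (- x / 2) - (t + c2) * exp (- x))"
  if "\<delta> \<in> {1, -1::real}"
proof (rule solves_pdeI[where f="\<lambda>x t. - 2 * \<delta> * exp (- x / 2) + (t + c2) * exp (- x)"
   and g="\<lambda>x t. \<delta> * exp (- x / 2) - (t + c2) * exp (- x)" and h="\<lambda>x t. - exp (- x)"])
  fix x t :: real
  show "((\<lambda>y. c1 + 4 * \<delta> * exp (- y / 2) - (t + c2) * exp (- y)) has_real_derivative
     - 2 * \<delta> * exp (- x / 2) + (t + c2) * exp (- x)) (at x)"
    by (auto intro!: derivative_eq_intros simp: algebra_simps)
  show "((\<lambda>y. - 2 * \<delta> * exp (- y / 2) + (t + c2) * exp (- y)) has_real_derivative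
     \<delta> * exp (- x / 2) - (t + c2) * exp (- x)) (at x)"
    by (auto intro!: derivative_eq_intros simp: algebra_simps)
  show "((\<lambda>s. c1 + 4 * \<delta> * exp (- x / 2) - (s + c2) * exp (- x)) has_real_derivative - exp (- x)) (at t)"
    by (auto intro!: derivative_eq_intros simp: algebra_simps)
  have "\<delta> * \<delta> = 1" using that by auto
  then show "- exp (- x) + (- 2 * \<delta> * exp (- x / 2) + (t + c2) * exp (- x) +
         (\<delta> * exp (- x / 2) - (t + c2) * exp (- x)))^2 = 0"
    using exp_half_sq[of x] by (simp add: power2_eq_square algebra_simps)
qed

lemma sol4: "solves_pde (\<lambda>x t. c1 + c2 * exp (- x) + \<delta> * x - t)"
  if "\<delta> \<in> {1, -1::real}"
proof (rule solves_pdeI[where f="\<lambda>x t. - c2 * exp (- x) + \<delta>" and g="\<lambda>x t. c2 * exp (- x)" and h="\<lambda>x t. -1"])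
  show "((\<lambda>y. c1 + c2 * exp (- y) + \<delta> * y - t) has_real_derivative - c2 * exp (- x) + \<delta>) (at x)" for x t
    by (auto intro!: derivative_eq_intros)
  show "((\<lambda>y. - c2 * exp (- y) + \<delta>) has_real_derivative c2 * exp (- x)) (at x)" for x :: real and t :: real
    by (auto intro!: derivative_eq_intros)
  show "((\<lambda>s. c1 + c2 * exp (- x) + \<delta> * x - s) has_real_derivative -1) (at t)" for x t
    by (auto intro!: derivative_eq_intros)
  show "- 1 + (- c2 * exp (- x) + \<delta> + c2 * exp (- x))^2 = 0" for x :: real and t :: real
    using that by (auto simp: power2_eq_square)
qed

lemma sol5:
  assumes "\<epsilon> \<in> {1, -1::real}" and "\<delta> \<in> {1, -1::real}"
    and k: "(\<epsilon> = -1 \<and> k \<noteq> 0) \<or> (\<epsilon> = 1 \<and> 0 < \<bar>k\<bar> \<and> \<bar>k\<bar> \<le> 1/2)"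
  shows "solves_pde (\<lambda>x t. c1 + \<epsilon> * t
            + (1 / (2 * k)) * (\<delta> * sqrt (1 - 4 * \<epsilon> * k^2) - 1) * (x + t / k))"
proof -
  define A where "A = (1 / (2 * k)) * (\<delta> * sqrt (1 - 4 * \<epsilon> * k^2) - 1)"
  have k0: "k \<noteq> 0" using k by auto
  have nn: "0 \<le> 1 - 4 * \<epsilon> * k^2"
  proof (cases "\<epsilon> = 1")
    case True
    with k have "\<bar>k\<bar> \<le> 1/2" by auto
    then have "\<bar>k\<bar>^2 \<le> (1/2)^2" by (intro power_mono) auto
    then show ?thesis using True by (simp add: power2_eq_square)
  next
    case False
    then have "\<epsilon> = -1" using assms by auto
    then show ?thesis by simp
  qed
  define s where "s = sqrt (1 - 4 * \<epsilon> * k^2)"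
  have s2: "s * s = 1 - 4 * \<epsilon> * k^2" unfolding s_def using nn
    by (metis power2_eq_square real_sqrt_pow2)
  have dd: "\<delta> * \<delta> = 1" using assms by auto
  have key: "\<epsilon> + A / k + A * A = 0"
  proof -
    define B where "B = \<delta> * s - 1"
    have AB: "A = B / (2 * k)" unfolding A_def s_def B_def by simp
    have B2: "4 * \<epsilon> * k * k + 2 * B + B * B = 0"
      unfolding B_def using s2 dd assms(2) by (auto simp: algebra_simps power2_eq_square)
    have "\<epsilon> + A / k + A * A = (4 * \<epsilon> * k * k + 2 * B + B * B) / (4 * k * k)"
      unfolding AB using k0 by (simp add: field_simps)
    then show ?thesis using B2 by simp
  qed
  show ?thesis
  proof (rule solves_pdeI[where f="\<lambda>x t. A" and g="\<lambda>x t. 0" and h="\<lambda>x t. \<epsilon> + A / k"])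
    show "((\<lambda>y. c1 + \<epsilon> * t + 1 / (2 * k) * (\<delta> * sqrt (1 - 4 * \<epsilon> * k\<^sup>2) - 1) * (y + t / k)) has_real_derivative A) (at x)" for x t
      unfolding A_def by (auto intro!: derivative_eq_intros simp: field_simps k0)
    show "((\<lambda>y. A) has_real_derivative 0) (at x)" for x :: real and t :: real
      by (auto intro!: derivative_eq_intros)
    show "((\<lambda>s. c1 + \<epsilon> * s + 1 / (2 * k) * (\<delta> * sqrt (1 - 4 * \<epsilon> * k\<^sup>2) - 1) * (x + s / k)) has_real_derivative \<epsilon> + A / k) (at t)" for x t
      unfolding A_def by (auto intro!: derivative_eq_intros simp: field_simps k0)
    show "\<epsilon> + A / k + (A + 0)^2 = 0" for x :: real and t :: real
      using key by (simp add: power2_eq_square)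
  qed
qed

theorem mainTheorem4:
  fixes c1 c2 \<epsilon> \<delta> :: real
  assumes "\<epsilon> \<in> {1, -1}" and "\<delta> \<in> {1, -1}"
  shows "solves_pde (\<lambda>x t. c1 + c2 * exp (- x))
    \<and> solves_pde (\<lambda>x t. c1 - \<epsilon> * (x + \<epsilon> * t) + 4 * \<delta> * c2 * exp (- (x + \<epsilon> * t) / 2)
                       + \<epsilon> * c2^2 * exp (- (x + \<epsilon> * t)))
    \<and> solves_pde (\<lambda>x t. c1 + 4 * \<delta> * exp (- x / 2) - (t + c2) * exp (- x))
    \<and> solves_pde (\<lambda>x t. c1 + c2 * exp (- x) + \<delta> * x - t)
    \<and> (\<forall>k::real. ((\<epsilon> = -1 \<and> k \<noteq> 0) \<or> (\<epsilon> = 1 \<and> 0 < \<bar>k\<bar> \<and> \<bar>k\<bar> \<le> 1/2)) \<longrightarrow>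
         solves_pde (\<lambda>x t. c1 + \<epsilon> * t
            + (1 / (2 * k)) * (\<delta> * sqrt (1 - 4 * \<epsilon> * k^2) - 1) * (x + t / k)))"
  using sol1 sol2[OF assms] sol3[OF assms(2)] sol4[OF assms(2)] sol5[OF assms] by blast

end
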